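(* Let $D$ be a database, $\mathcal{A}$ an automaton, and $w$ a walk of $D$ belonging to the walk semantics $\llbracket \mathcal{A}\rrbracket_W(D)$ (i.e. $w=\pi_D(r)$ for some run $r$ of $D\times\mathcal{A}$). Then there exist $n\ge 1$ and walks $u_1,v_1,u_2,\dots,v_n,u_{n+1}$ of $D$ such that $w=u_1v_1u_2\cdots v_nu_{n+1}$ (concatenation), every $u_i$ satisfies $\mathrm{src}(u_i)=\mathrm{tgt}(u_i)$, and the walk $v_1v_2\cdots v_n$ belongs to the simple-run semantics $\llbracket \mathcal{A}\rrbracket_{SR}(D)$.
   Context: A database is $D=(\Sigma,V,E,\mathrm{src},\mathrm{tgt},\mathrm{lbl})$ with $\Sigma$ a finite alphabet, $V$ a finite set of vertices, $E$ a finite set of edges, $\mathrm{src},\mathrm{tgt}:E\to V$ and $\mathrm{lbl}:E\to 2^\Sigma$. A walk is a sequence $(n_0,e_0,n_1,\dots,e_{k-1},n_k)$, $k\ge0$, of vertices and edges with $\mathrm{src}(e_i)=n_i$, $\mathrm{tgt}(e_i)=n_{i+1}$; its length is $k$, $\mathrm{src}(w)=n_0$, $\mathrm{tgt}(w)=n_k$, and $\mathrm{lbl}(w)=\{u_0\cdots u_{k-1}: u_i\in\mathrm{lbl}(e_i)\}$. Walks $w,w'$ with $\mathrm{tgt}(w)=\mathrm{src}(w')$ concatenate into $ww'$. A walk is simple if it repeats no vertex. An automaton is $\mathcal{A}=(\Sigma,Q,\Delta,I,F)$ with $\Delta\subseteq Q\times\Sigma\times Q$, initial states $I$ and final states $F$.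 The run database $D\times\mathcal{A}$ is the database with vertex set $V\times Q$, edge set $\{(e,(q,a,q'))\in E\times\Delta : a\in\mathrm{lbl}(e)\}$, where the edge $(e,(q,a,q'))$ has source $(\mathrm{src}(e),q)$, target $(\mathrm{tgt}(e),q')$ and label $\{a\}$. A run is a walk of $D\times\mathcal{A}$ starting in $V\times I$ and ending in $V\times F$. $\pi_D$ maps $(n,q)\mapsto n$, $(e,t)\mapsto e$, and walks componentwise. The walk semantics $\llbracket\mathcal{A}\rrbracket_W(D)$ is the bag $\{\pi_D(r): r \text{ run of } D\times\mathcal{A}\}$, and the simple-run semantics $\llbracket\mathcal{A}\rrbracket_{SR}(D)$ is the bag $\{\pi_D(r): r\text{ simple run of }D\times\mathcal{A}\}$ (a walk's multiplicity is the number of such runs projecting to it). *)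

theory Defs
  imports Main
begin

record ('a, 'v, 'e) db =
  Sigma :: "'a set"
  V :: "'v set"
  E :: "'e set"
  src :: "'e \<Rightarrow> 'v"
  tgt :: "'e \<Rightarrow> 'v"
  lbl :: "'e \<Rightarrow> 'a set"

definition db_wf :: "('a, 'v, 'e) db \<Rightarrow> bool" where
  "db_wf D \<longleftrightarrow> finite (Sigma D) \<and> finite (V D) \<and> finite (E D) \<and>
     (\<forall>e \<in> E D. src D e \<in> V D \<and> tgt D e \<in> V D \<and> lbl D e \<subseteq> Sigma D)"

record ('a, 'q) aut =
  ASigma :: "'a set"
  Q :: "'q set"
  Delta :: "('q \<times> 'a \<times> 'q) set"
  Init :: "'q set"
  Fin :: "'q set"

definition aut_wf :: "('a, 'q) aut \<Rightarrow> bool" where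
  "aut_wf A \<longleftrightarrow> finite (ASigma A) \<and> finite (Q A) \<and>
     Delta A \<subseteq> Q A \<times> ASigma A \<times> Q A \<and> Init A \<subseteq> Q A \<and> Fin A \<subseteq> Q A"

text \<open>A walk (n0, e0, n1, ..., e(k-1), nk) is represented by its first vertex
  and its list of edges; the remaining vertices are the targets of the edges.\<close>

type_synonym ('v, 'e) walk = "'v \<times> 'e list"

definition walk_src :: "('v, 'e) walk \<Rightarrow> 'v" where
  "walk_src w = fst w"

definition walk_vertices :: "('a, 'v, 'e) db \<Rightarrow> ('v, 'e) walk \<Rightarrow> 'v list" where
  "walk_vertices D w = fst w # map (tgt D) (snd w)"

definition walk_tgt :: "('a, 'v, 'e) db \<Rightarrow> ('v, 'e) walk \<Rightarrow> 'v" where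
  "walk_tgt D w = last (walk_vertices D w)"

definition walk_len :: "('v, 'e) walk \<Rightarrow> nat" where
  "walk_len w = length (snd w)"

definition is_walk :: "('a, 'v, 'e) db \<Rightarrow> ('v, 'e) walk \<Rightarrow> bool" where
  "is_walk D w \<longleftrightarrow> fst w \<in> V D \<and> set (snd w) \<subseteq> E D \<and>
     (\<forall>i < length (snd w). src D (snd w ! i) = walk_vertices D w ! i)"

definition simple_walk :: "('a, 'v, 'e) db \<Rightarrow> ('v, 'e) walk \<Rightarrow> bool" where
  "simple_walk D w \<longleftrightarrow> is_walk D w \<and> distinct (walk_vertices D w)"

definition concatenable :: "('a, 'v, 'e) db \<Rightarrow> ('v, 'e) walk list \<Rightarrow> bool" where
  "concatenable D ws \<longleftrightarrow>
     (\<forall>i. Suc i < length ws \<longrightarrow> walk_tgt D (ws ! i) = walk_src (ws ! Suc i))"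

definition concat_walks :: "('v, 'e) walk list \<Rightarrow> ('v, 'e) walk" where
  "concat_walks ws = (walk_src (hd ws), concat (map snd ws))"

fun interleave :: "'x list \<Rightarrow> 'x list \<Rightarrow> 'x list" where
  "interleave (u # us) (v # vs) = u # v # interleave us vs"
| "interleave us [] = us"
| "interleave [] vs = vs"

definition run_db :: "('a, 'v, 'e) db \<Rightarrow> ('a, 'q) aut
    \<Rightarrow> ('a, 'v \<times> 'q, 'e \<times> ('q \<times> 'a \<times> 'q)) db" where
  "run_db D A = \<lparr> Sigma = Sigma D,
     V = V D \<times> Q A,
     E = {(e, (q, a, q')). e \<in> E D \<and> (q, a, q') \<in> Delta A \<and> a \<in> lbl D e},
     src = (\<lambda>(e, (q, a, q')). (src D e, q)),
     tgt = (\<lambda>(e, (q, a, q')). (tgt D e, q')),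
     lbl = (\<lambda>(e, (q, a, q')). {a}) \<rparr>"

definition is_run :: "('a, 'v, 'e) db \<Rightarrow> ('a, 'q) aut
    \<Rightarrow> ('v \<times> 'q, 'e \<times> ('q \<times> 'a \<times> 'q)) walk \<Rightarrow> bool" where
  "is_run D A r \<longleftrightarrow> is_walk (run_db D A) r \<and>
     walk_src r \<in> V D \<times> Init A \<and> walk_tgt (run_db D A) r \<in> V D \<times> Fin A"

definition proj_D :: "('v \<times> 'q, 'e \<times> 't) walk \<Rightarrow> ('v, 'e) walk" where
  "proj_D r = (fst (fst r), map fst (snd r))"

text \<open>Support of the bag semantics (membership = positive multiplicity).\<close>

definition walk_sem :: "('a, 'v, 'e) db \<Rightarrow> ('a, 'q) aut \<Rightarrow> ('v, 'e) walk set" where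
  "walk_sem D A = {proj_D r | r. is_run D A r}"

definition sr_sem :: "('a, 'v, 'e) db \<Rightarrow> ('a, 'q) aut \<Rightarrow> ('v, 'e) walk set" where
  "sr_sem D A = {proj_D r | r. is_run D A r \<and> simple_walk (run_db D A) r}"

end

theory Submission
  imports Defs
begin

lemma wv_Cons: "walk_vertices D (s, e#es) = s # walk_vertices D (tgt D e, es)"
  by (simp add: walk_vertices_def)

lemma wt_Nil[simp]: "walk_tgt D (s, []) = s"
  by (simp add: walk_tgt_def walk_vertices_def)

lemma wt_Cons[simp]: "walk_tgt D (s, e#es) = walk_tgt D (tgt D e, es)"
  by (simp add: walk_tgt_def walk_vertices_def)

lemma wt_append: "walk_tgt D (s, p@q) = walk_tgt D (walk_tgt D (s,p), q)"
  by (induction p arbitrary: s) auto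

lemma iw_Nil[simp]: "is_walk D (s, []) \<longleftrightarrow> s \<in> V D"
  by (simp add: is_walk_def)

lemma iw_V: "is_walk D (s, es) \<Longrightarrow> s \<in> V D"
  by (simp add: is_walk_def)

lemma iw_Cons:
  assumes "\<forall>e\<in>E D. tgt D e \<in> V D"
  shows "is_walk D (s, e#es) \<longleftrightarrow> s \<in> V D \<and> e \<in> E D \<and> src D e = s \<and> is_walk D (tgt D e, es)"
  using assms unfolding is_walk_def walk_vertices_def
  by (auto simp: All_less_Suc2)

lemma iw_append:
  assumes "\<forall>e\<in>E D. tgt D e \<in> V D"
  shows "is_walk D (s, p@q) \<longleftrightarrow> is_walk D (s,p) \<and> is_walk D (walk_tgt D (s,p), q)"
  using assms
proof (induction p arbitrary: s)
  case Nil
  then show ?case using iw_V by auto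
next
  case (Cons a p)
  then show ?case by (simp add: iw_Cons[OF Cons.prems])
qed

lemma run_tgt[simp]: "fst (tgt (run_db D A) e) = tgt D (fst e)"
  by (cases e) (auto simp: run_db_def)

lemma run_src[simp]: "fst (src (run_db D A) e) = src D (fst e)"
  by (cases e) (auto simp: run_db_def)

lemma run_E: "e \<in> E (run_db D A) \<Longrightarrow> fst e \<in> E D"
  by (cases e) (auto simp: run_db_def)

lemma run_V: "s \<in> V (run_db D A) \<Longrightarrow> fst s \<in> V D"
  by (auto simp: run_db_def)

lemma run_tgtV:
  assumes "db_wf D" "aut_wf A"
  shows "\<forall>e\<in>E (run_db D A). tgt (run_db D A) e \<in> V (run_db D A)"
  using assms by (auto simp: run_db_def db_wf_def aut_wf_def)

lemma db_tgtV: "db_wf D \<Longrightarrow> \<forall>e\<in>E D. tgt D e \<in> V D"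
  by (auto simp: db_wf_def)

lemma iw_proj:
  assumes "db_wf D" "aut_wf A"
  shows "is_walk (run_db D A) (s, es) \<Longrightarrow> is_walk D (proj_D (s, es))"
proof (induction es arbitrary: s)
  case Nil
  then show ?case by (simp add: proj_D_def run_V)
next
  case (Cons e es)
  have h: "s \<in> V (run_db D A) \<and> e \<in> E (run_db D A) \<and> src (run_db D A) e = s \<and>
     is_walk (run_db D A) (tgt (run_db D A) e, es)"
    using Cons.prems iw_Cons[OF run_tgtV[OF assms]] by blast
  then have "is_walk D (proj_D (tgt (run_db D A) e, es))" using Cons.IH by blast
  moreover have "fst s \<in> V D" using h run_V by blast
  moreover have "fst e \<in> E D" using h run_E by blast
  moreover have "src D (fst e) = fst s" using h run_src by metis
  ultimately show ?case using iw_Cons[OF db_tgtV[OF assms(1)]]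
    by (simp add: proj_D_def)
qed

lemma wt_proj: "walk_tgt D (proj_D (s, es)) = fst (walk_tgt (run_db D A) (s, es))"
proof (induction es arbitrary: s)
  case Nil
  then show ?case by (simp add: proj_D_def)
next
  case (Cons e es)
  have "walk_tgt D (proj_D (tgt (run_db D A) e, es)) = fst (walk_tgt (run_db D A) (tgt (run_db D A) e, es))"
    by (rule Cons.IH)
  then show ?case by (simp add: proj_D_def)
qed

lemma conc_Cons2: "concatenable D (a # b # ws) \<longleftrightarrow> walk_tgt D a = walk_src b \<and> concatenable D (b # ws)"
  unfolding concatenable_def
proof (intro iffI allI impI conjI)
  fix i assume h: "\<forall>i. Suc i < length (a # b # ws) \<longrightarrow> walk_tgt D ((a # b # ws) ! i) = walk_src ((a # b # ws) ! Suc i)"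
  show "walk_tgt D a = walk_src b" using h[rule_format, of 0] by simp
  assume "Suc i < length (b # ws)"
  then show "walk_tgt D ((b # ws) ! i) = walk_src ((b # ws) ! Suc i)" using h[rule_format, of "Suc i"] by simp
next
  fix i assume h: "walk_tgt D a = walk_src b \<and> (\<forall>i. Suc i < length (b # ws) \<longrightarrow> walk_tgt D ((b # ws) ! i) = walk_src ((b # ws) ! Suc i))"
    and i: "Suc i < length (a # b # ws)"
  show "walk_tgt D ((a # b # ws) ! i) = walk_src ((a # b # ws) ! Suc i)"
    using h i by (cases i) auto
qed

lemma conc_single[simp]: "concatenable D [a]"
  by (simp add: concatenable_def)

lemma cw_Cons: "ws \<noteq> [] \<Longrightarrow> concat_walks (a # ws) = (walk_src a, snd a @ snd (concat_walks ws))"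
  by (simp add: concat_walks_def)

definition decomp where
  "decomp D w us vs \<longleftrightarrow> length us = length vs + 1 \<and> vs \<noteq> [] \<and>
     (\<forall>u \<in> set us. is_walk D u \<and> walk_src u = walk_tgt D u) \<and>
     (\<forall>v \<in> set vs. is_walk D v) \<and>
     concatenable D (interleave us vs) \<and>
     w = concat_walks (interleave us vs) \<and>
     concatenable D vs"

lemma main:
  fixes D :: "('a, 'v, 'e) db" and A :: "('a, 'q) aut" and s :: "'v \<times> 'q"
    and es :: "('e \<times> ('q \<times> 'a \<times> 'q)) list"
  assumes wfD: "db_wf D" and wfA: "aut_wf A"
  shows "is_walk (run_db D A) (s, es) \<Longrightarrow> \<exists>r' us vs. is_walk (run_db D A) r' \<and>
     distinct (walk_vertices (run_db D A) r') \<and> fst r' = s \<and>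
     walk_tgt (run_db D A) r' = walk_tgt (run_db D A) (s, es) \<and>
     set (walk_vertices (run_db D A) r') \<subseteq> set (walk_vertices (run_db D A) (s, es)) \<and>
     decomp D (proj_D (s, es)) us vs \<and> concat_walks vs = proj_D r'"
proof (induction "length es" arbitrary: s es rule: less_induct)
  case less
  let ?G = "run_db D A"
  note tG = run_tgtV[OF wfD wfA]
  note tD = db_tgtV[OF wfD]
  show ?case
  proof (cases "s \<in> set (map (tgt ?G) es)")
    case False
    show ?thesis
    proof (cases es)
      case Nil
      have sV: "fst s \<in> V D" using run_V[OF iw_V[OF less.prems]] .
      let ?u = "(fst s, []) :: ('v, 'e) walk"
      have "decomp D (proj_D (s, es)) [?u, ?u] [?u]"
        using sV Nil by (simp add: decomp_def proj_D_def concat_walks_def walk_src_def conc_Cons2)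
      moreover have "concat_walks [?u] = proj_D (s, [])" by (simp add: proj_D_def concat_walks_def walk_src_def)
      ultimately show ?thesis using less.prems Nil
        by (intro exI[of _ "(s, [])"] exI[of _ "[?u, ?u]"] exI[of _ "[?u]"]) (simp add: walk_vertices_def)
    next
      case (Cons e es')
      have h: "s \<in> V ?G \<and> e \<in> E ?G \<and> src ?G e = s \<and> is_walk ?G (tgt ?G e, es')"
        using less.prems Cons iw_Cons[OF tG] by blast
      obtain r'' us vs where r'': "is_walk ?G r''" "distinct (walk_vertices ?G r'')" "fst r'' = tgt ?G e"
        "walk_tgt ?G r'' = walk_tgt ?G (tgt ?G e, es')"
        "set (walk_vertices ?G r'') \<subseteq> set (walk_vertices ?G (tgt ?G e, es'))"
        "decomp D (proj_D (tgt ?G e, es')) us vs" "concat_walks vs = proj_D r''"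
        using less.hyps[of es' "tgt ?G e"] h Cons by (simp only: length_Cons lessI simp_thms) blast
      obtain u0 ut where us: "us = u0 # ut" using r''(6) by (cases us) (auto simp: decomp_def)
      obtain v0 vt where vs: "vs = v0 # vt" using r''(6) by (cases vs) (auto simp: decomp_def)
      obtain rs where rr: "r'' = (tgt ?G e, rs)" using r''(3) by (cases r'') auto
      define r' where "r' = (s, e # rs)"
      have iwr: "is_walk ?G r'" unfolding r'_def using h r''(1) rr iw_Cons[OF tG] by simp
      have "s \<notin> set (walk_vertices ?G (tgt ?G e, es'))" using False Cons by (simp add: walk_vertices_def)
      then have dr: "distinct (walk_vertices ?G r')" unfolding r'_def using r''(2,5) rr
        by (auto simp: wv_Cons)
      have tr: "walk_tgt ?G r' = walk_tgt ?G (s, es)" unfolding r'_def using Cons r''(4) rr by simp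
      have sr: "set (walk_vertices ?G r') \<subseteq> set (walk_vertices ?G (s, es))" unfolding r'_def
        using Cons r''(5) rr by (auto simp add: wv_Cons)
      let ?v = "(fst s, [fst e]) :: ('v, 'e) walk"
      let ?u = "(fst s, []) :: ('v, 'e) walk"
      have iwv: "is_walk D ?v"
      proof -
        have "is_walk ?G (s, [e])" using h iw_Cons[OF tG] tG by simp
        from iw_proj[OF wfD wfA this] show ?thesis by (simp add: proj_D_def)
      qed
      have sV: "fst s \<in> V D" using h run_V by blast
      have d: "length us = length vs + 1" "(\<forall>u \<in> set us. is_walk D u \<and> walk_src u = walk_tgt D u)"
        "(\<forall>v \<in> set vs. is_walk D v)" "concatenable D (interleave us vs)"
        "proj_D (tgt ?G e, es') = concat_walks (interleave us vs)" "concatenable D vs"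
        using r''(6) by (auto simp: decomp_def)
      have iu: "interleave us vs = u0 # v0 # interleave ut vt" using us vs by simp
      have su0: "walk_src u0 = tgt D (fst e)" using d(5) iu
        by (simp add: concat_walks_def proj_D_def)
      have sv0: "walk_src v0 = tgt D (fst e)" using r''(7) vs rr
        by (simp add: concat_walks_def proj_D_def)
      have dec: "decomp D (proj_D (s, es)) (?u # us) (?v # vs)"
        unfolding decomp_def
      proof (intro conjI)
        show "length (?u # us) = length (?v # vs) + 1" using d(1) by simp
        show "\<forall>u \<in> set (?u # us). is_walk D u \<and> walk_src u = walk_tgt D u" using d(2) sV by (simp add: walk_src_def)
        show "\<forall>v \<in> set (?v # vs). is_walk D v" using d(3) iwv by simp
        show "concatenable D (interleave (?u # us) (?v # vs))" using d(4) iu su0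
          by (simp add: conc_Cons2 walk_src_def)
        show "proj_D (s, es) = concat_walks (interleave (?u # us) (?v # vs))" using d(5) iu Cons
          by (simp add: concat_walks_def proj_D_def walk_src_def)
        show "concatenable D (?v # vs)" using d(6) vs sv0 by (simp add: conc_Cons2)
      qed simp
      have "concat_walks (?v # vs) = proj_D r'" using r''(7) vs rr unfolding r'_def
        by (simp add: concat_walks_def proj_D_def walk_src_def)
      then show ?thesis using iwr dr tr sr dec by (intro exI[of _ r'] exI[of _ "?u # us"] exI[of _ "?v # vs"]) (simp add: r'_def)
    qed
  next
    case True
    obtain xs ys where sp: "map (tgt ?G) es = xs @ s # ys" "s \<notin> set ys"
      using split_list_last[OF True] by blast
    define k where "k = length xs"
    define es1 where "es1 = take (Suc k) es"
    define es2 where "es2 = drop (Suc k) es"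
    have eq: "es = es1 @ es2" unfolding es1_def es2_def by simp
    have "map (tgt ?G) es2 = drop (Suc k) (map (tgt ?G) es)" by (simp add: es2_def drop_map)
    also have "\<dots> = ys" using sp(1) by (simp add: k_def)
    finally have m2: "map (tgt ?G) es2 = ys" .
    have "map (tgt ?G) es1 = take (Suc k) (map (tgt ?G) es)" by (simp add: es1_def take_map)
    also have "\<dots> = xs @ [s]" using sp(1) by (simp add: k_def)
    finally have m1: "map (tgt ?G) es1 = xs @ [s]" .
    have t1: "walk_tgt ?G (s, es1) = s" using m1 by (simp add: walk_tgt_def walk_vertices_def)
    have w12: "is_walk ?G (s, es1)" "is_walk ?G (s, es2)"
      using less.prems eq iw_append[OF tG, of s es1 es2] t1 by auto
    have lt: "length es2 < length es"
    proof -
      have "length es = length xs + 1 + length ys" using arg_cong[OF sp(1), of length] by simp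
      moreover have "length es2 = length ys" using arg_cong[OF m2, of length] by simp
      ultimately show ?thesis by simp
    qed
    obtain r'' us vs where r'': "is_walk ?G r''" "distinct (walk_vertices ?G r'')" "fst r'' = s"
        "walk_tgt ?G r'' = walk_tgt ?G (s, es2)"
        "set (walk_vertices ?G r'') \<subseteq> set (walk_vertices ?G (s, es2))"
        "decomp D (proj_D (s, es2)) us vs" "concat_walks vs = proj_D r''"
      using less.hyps[OF lt w12(2)] by blast
    obtain u0 ut where us: "us = u0 # ut" using r''(6) by (cases us) (auto simp: decomp_def)
    obtain v0 vt where vs: "vs = v0 # vt" using r''(6) by (cases vs) (auto simp: decomp_def)
    have d: "length us = length vs + 1" "(\<forall>u \<in> set us. is_walk D u \<and> walk_src u = walk_tgt D u)"
        "(\<forall>v \<in> set vs. is_walk D v)" "concatenable D (interleave us vs)"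
        "proj_D (s, es2) = concat_walks (interleave us vs)" "concatenable D vs"
        using r''(6) by (auto simp: decomp_def)
    have iu: "interleave us vs = u0 # v0 # interleave ut vt" using us vs by simp
    have su0: "walk_src u0 = fst s" using d(5) iu
        by (simp add: concat_walks_def proj_D_def)
    have u0eq: "u0 = (fst s, snd u0)" using su0 by (cases u0) (simp add: walk_src_def)
    have u0w: "is_walk D u0" "walk_tgt D u0 = fst s" using d(2) us su0 by auto
    define u0' where "u0' = (fst s, map fst es1 @ snd u0)"
    have p1: "is_walk D (fst s, map fst es1)" using iw_proj[OF wfD wfA w12(1)] by (simp add: proj_D_def)
    have pt1: "walk_tgt D (fst s, map fst es1) = fst s" using wt_proj[of D s es1 A] t1 by (simp add: proj_D_def)
    have u0'w: "is_walk D u0'" unfolding u0'_def using iw_append[OF tD] p1 pt1 u0w u0eq by metis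
    have u0't: "walk_tgt D u0' = fst s" unfolding u0'_def using wt_append pt1 u0w u0eq by metis
    have dec: "decomp D (proj_D (s, es)) (u0' # ut) vs"
      unfolding decomp_def
    proof (intro conjI)
      show "length (u0' # ut) = length vs + 1" using d(1) us by simp
      show "\<forall>u \<in> set (u0' # ut). is_walk D u \<and> walk_src u = walk_tgt D u"
        using d(2) us u0'w u0't by (simp add: walk_src_def u0'_def)
      show "\<forall>v \<in> set vs. is_walk D v" using d(3) by simp
      show "concatenable D (interleave (u0' # ut) vs)" using d(4) iu vs u0't u0w su0
        by (simp add: conc_Cons2)
      show "proj_D (s, es) = concat_walks (interleave (u0' # ut) vs)" using d(5) iu vs eq
        by (simp add: concat_walks_def proj_D_def walk_src_def u0'_def)
      show "concatenable D vs" using d(6) .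
      show "vs \<noteq> []" using vs by simp
    qed
    have "set (walk_vertices ?G (s, es2)) \<subseteq> set (walk_vertices ?G (s, es))"
      using sp m2 by (simp add: walk_vertices_def) blast
    moreover have "walk_tgt ?G (s, es2) = walk_tgt ?G (s, es)" using eq t1 wt_append by metis
    ultimately show ?thesis using r'' dec by (intro exI[of _ r''] exI[of _ "u0' # ut"] exI[of _ vs]) auto
  qed
qed

theorem lemma13:
  fixes D :: "('a, 'v, 'e) db" and A :: "('a, 'q) aut" and w :: "('v, 'e) walk"
  assumes "db_wf D" and "aut_wf A" and "ASigma A = Sigma D"
    and "w \<in> walk_sem D A"
  shows "\<exists>n us vs. n \<ge> 1 \<and> length us = n + 1 \<and> length vs = n \<and>
           (\<forall>u \<in> set us. is_walk D u \<and> walk_src u = walk_tgt D u) \<and>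
           (\<forall>v \<in> set vs. is_walk D v) \<and>
           concatenable D (interleave us vs) \<and>
           w = concat_walks (interleave us vs) \<and>
           concatenable D vs \<and>
           concat_walks vs \<in> sr_sem D A"
proof -
  obtain r where r: "is_run D A r" "w = proj_D r" using assms(4) by (auto simp: walk_sem_def)
  obtain s es where rr: "r = (s, es)" by (cases r)
  have "is_walk (run_db D A) (s, es)" using r(1) rr by (simp add: is_run_def)
  from main[OF assms(1,2) this] obtain r' us vs where m: "is_walk (run_db D A) r'"
     "distinct (walk_vertices (run_db D A) r')" "fst r' = s"
     "walk_tgt (run_db D A) r' = walk_tgt (run_db D A) (s, es)"
     "decomp D (proj_D (s, es)) us vs" "concat_walks vs = proj_D r'" by blast
  have "is_run D A r'" using r(1) rr m(1,3,4) by (simp add: is_run_def walk_src_def)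
  moreover have "simple_walk (run_db D A) r'" using m(1,2) by (simp add: simple_walk_def)
  ultimately have "concat_walks vs \<in> sr_sem D A" using m(6) unfolding sr_sem_def by blast
  moreover have "length vs \<ge> 1" using m(5) by (cases vs) (auto simp: decomp_def)
  ultimately show ?thesis using m(5) r(2) rr
    by (intro exI[of _ "length vs"] exI[of _ us] exI[of _ vs]) (simp add: decomp_def)
qed

end
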